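(* $W_{\max}(17,9)\in\{5,6,\dots,18\}$ and $W_{\max}(18,9)\in\{4,5,\dots,21\}$.
   Context: A weighing matrix of order $n$ and weight $k$ is an $n\times n$ matrix $W$ with entries in $\{1,-1,0\}$ such that $WW^T=kI_n$. Two weighing matrices $W_1,W_2$ of order $n$ and weight $k$ are unbiased if $\frac{1}{\sqrt{k}}W_1W_2^T$ is also a weighing matrix of order $n$ and weight $k$; a set is mutually unbiased if any two distinct members are unbiased. $W_{\max}(n,9)$ denotes the maximum size of a set of mutually unbiased weighing matrices of order $n$ and weight $9$. *)

theory Defs
  imports Complex_Main "Jordan_Normal_Form.Matrix"
begin

definition weighing_matrix :: "nat \<Rightarrow> nat \<Rightarrow> real mat \<Rightarrow> bool" where
  "weighing_matrix n k W \<longleftrightarrow>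
     W \<in> carrier_mat n n \<and>
     (\<forall>i<n. \<forall>j<n. W $$ (i, j) \<in> {1, -1, 0}) \<and>
     W * transpose_mat W = of_nat k \<cdot>\<^sub>m one_mat n"

definition unbiased :: "nat \<Rightarrow> nat \<Rightarrow> real mat \<Rightarrow> real mat \<Rightarrow> bool" where
  "unbiased n k W1 W2 \<longleftrightarrow>
     weighing_matrix n k W1 \<and> weighing_matrix n k W2 \<and>
     weighing_matrix n k ((1 / sqrt (real k)) \<cdot>\<^sub>m (W1 * transpose_mat W2))"

definition mutually_unbiased :: "nat \<Rightarrow> nat \<Rightarrow> real mat set \<Rightarrow> bool" where
  "mutually_unbiased n k S \<longleftrightarrow>
     (\<forall>W\<in>S. weighing_matrix n k W) \<and>
     (\<forall>W1\<in>S. \<forall>W2\<in>S. W1 \<noteq> W2 \<longrightarrow> unbiased n k W1 W2)"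

text \<open>Maximum size of a (finite) set of mutually unbiased weighing matrices.
  All such sets are finite anyway, since entries lie in {1,-1,0}.\<close>
definition W_max :: "nat \<Rightarrow> nat \<Rightarrow> nat" where
  "W_max n k = Max {card S | S. finite S \<and> mutually_unbiased n k S}"

end

theory Submission imports Defs "Jordan_Normal_Form.Determinant" begin

lemma CS_sum:
  fixes a b :: "'a \<Rightarrow> real"
  shows "(\<Sum>i\<in>I. a i * b i)^2 \<le> (\<Sum>i\<in>I. (a i)^2) * (\<Sum>i\<in>I. (b i)^2)"
proof -
  have e: "(\<Sum>i\<in>I. \<Sum>j\<in>I. (a i * b j - a j * b i)^2)
     = 2*((\<Sum>i\<in>I. (a i)^2) * (\<Sum>i\<in>I. (b i)^2)) - 2*(\<Sum>i\<in>I. a i * b i)^2"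
  proof -
    have "(\<Sum>i\<in>I. \<Sum>j\<in>I. (a i * b j - a j * b i)^2)
       = (\<Sum>i\<in>I. \<Sum>j\<in>I. (a i)^2 * (b j)^2) + (\<Sum>i\<in>I. \<Sum>j\<in>I. (a j)^2 * (b i)^2)
         - 2 * (\<Sum>i\<in>I. \<Sum>j\<in>I. (a i * b i) * (a j * b j))"
      by (simp add: power2_eq_square algebra_simps sum.distrib sum_subtractf sum_distrib_left)
    also have "\<dots> = 2*((\<Sum>i\<in>I. (a i)^2) * (\<Sum>i\<in>I. (b i)^2)) - 2*(\<Sum>i\<in>I. a i * b i)^2"
      by (simp add: sum_product[symmetric] power2_eq_square sum.swap[of _ I I] mult.commute)
    finally show ?thesis .
  qed
  have "0 \<le> (\<Sum>i\<in>I. \<Sum>j\<in>I. (a i * b j - a j * b i)^2)"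
    by (intro sum_nonneg) auto
  then show ?thesis using e by linarith
qed

lemma sum4:
  "(\<Sum>p\<in>A\<times>B\<times>C\<times>D. F p) = (\<Sum>i\<in>A. \<Sum>j\<in>B. \<Sum>k\<in>C. \<Sum>l\<in>D. F (i,j,k,l))"
  unfolding sum.cartesian_product by (simp add: split_def)

lemma pow4_sum:
  fixes a :: "nat \<Rightarrow> real"
  shows "(\<Sum>i\<in>A. a i)^4 = (\<Sum>i\<in>A. \<Sum>j\<in>A. \<Sum>k\<in>A. \<Sum>l\<in>A. a i * a j * a k * a l)"
proof -
  have "(\<Sum>i\<in>A. a i)^4 = (\<Sum>i\<in>A. a i) * (\<Sum>j\<in>A. a j) * (\<Sum>k\<in>A. a k) * (\<Sum>l\<in>A. a l)"
    by (simp add: power4_eq_xxxx)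
  also have "\<dots> = (\<Sum>i\<in>A. \<Sum>j\<in>A. \<Sum>k\<in>A. \<Sum>l\<in>A. a i * a j * a k * a l)"
    by (simp add: sum_distrib_left sum_distrib_right mult_ac)
  finally show ?thesis .
qed

definition dl :: "nat \<Rightarrow> nat \<Rightarrow> real" where "dl i j = (if i = j then 1 else 0)"

definition Sd :: "nat \<times> nat \<times> nat \<times> nat \<Rightarrow> real" where
  "Sd p = (case p of (i,j,k,l) \<Rightarrow> dl i j * dl k l + dl i k * dl j l + dl i l * dl j k)"

lemma dl_h1:
  assumes "finite A" "k \<in> A"
  shows "(\<Sum>l\<in>A. c * (dl k l * g l)) = c * g k"
proof -
  have "(\<Sum>l\<in>A. c * (dl k l * g l)) = (\<Sum>l\<in>A. if k = l then c * g l else 0)"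
    by (rule sum.cong) (auto simp: dl_def)
  also have "\<dots> = c * g k" using assms by (simp add: sum.delta)
  finally show ?thesis .
qed

lemma dl_h2:
  assumes "finite A" "k \<in> A"
  shows "(\<Sum>l\<in>A. dl k l * g l) = g k"
  using dl_h1[OF assms, of 1 g] by simp

lemma delta_sum:
  fixes F :: "nat \<times> nat \<times> nat \<times> nat \<Rightarrow> real" and n :: nat
  defines "A \<equiv> {..<n}"
  shows "(\<Sum>p\<in>A\<times>A\<times>A\<times>A. F p * Sd p) =
    (\<Sum>i\<in>A. \<Sum>k\<in>A. F (i,i,k,k)) + (\<Sum>i\<in>A. \<Sum>j\<in>A. F (i,j,i,j)) + (\<Sum>i\<in>A. \<Sum>j\<in>A. F (i,j,j,i))"
proof -
  have fin: "finite A" by (simp add: A_def)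
  have p1: "\<And>i j k l. F (i,j,k,l) * (dl i j * dl k l) = dl i j * (dl k l * F (i,j,k,l))"
    by (simp add: mult_ac)
  have p2: "\<And>i j k l. F (i,j,k,l) * (dl i k * dl j l) = dl i k * (dl j l * F (i,j,k,l))"
    by (simp add: mult_ac)
  have p3: "\<And>i j k l. F (i,j,k,l) * (dl i l * dl j k) = dl j k * (dl i l * F (i,j,k,l))"
    by (simp add: mult_ac)
  have 1: "(\<Sum>i\<in>A. \<Sum>j\<in>A. \<Sum>k\<in>A. \<Sum>l\<in>A. F (i,j,k,l) * (dl i j * dl k l)) = (\<Sum>i\<in>A. \<Sum>k\<in>A. F (i,i,k,k))"
    unfolding p1 using fin by (simp add: dl_h1 dl_h2 sum_distrib_left[symmetric])
  have 2: "(\<Sum>i\<in>A. \<Sum>j\<in>A. \<Sum>k\<in>A. \<Sum>l\<in>A. F (i,j,k,l) * (dl i k * dl j l)) = (\<Sum>i\<in>A. \<Sum>j\<in>A. F (i,j,i,j))"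
    unfolding p2 using fin by (simp add: dl_h1 dl_h2)
  have 3: "(\<Sum>i\<in>A. \<Sum>j\<in>A. \<Sum>k\<in>A. \<Sum>l\<in>A. F (i,j,k,l) * (dl i l * dl j k)) = (\<Sum>i\<in>A. \<Sum>j\<in>A. F (i,j,j,i))"
    unfolding p3 using fin by (simp add: dl_h1 dl_h2)
  have "(\<Sum>p\<in>A\<times>A\<times>A\<times>A. F p * Sd p) = (\<Sum>i\<in>A. \<Sum>j\<in>A. \<Sum>k\<in>A. \<Sum>l\<in>A.
      F (i,j,k,l) * (dl i j * dl k l) + F (i,j,k,l) * (dl i k * dl j l) + F (i,j,k,l) * (dl i l * dl j k))"
    unfolding sum4 Sd_def by (simp add: distrib_left)
  also have "\<dots> = (\<Sum>i\<in>A. \<Sum>j\<in>A. \<Sum>k\<in>A. \<Sum>l\<in>A. F (i,j,k,l) * (dl i j * dl k l))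
     + (\<Sum>i\<in>A. \<Sum>j\<in>A. \<Sum>k\<in>A. \<Sum>l\<in>A. F (i,j,k,l) * (dl i k * dl j l))
     + (\<Sum>i\<in>A. \<Sum>j\<in>A. \<Sum>k\<in>A. \<Sum>l\<in>A. F (i,j,k,l) * (dl i l * dl j k))"
    by (simp only: sum.distrib)
  finally show ?thesis unfolding 1 2 3 .
qed


lemma sum_sq_c:
  fixes a :: "nat \<Rightarrow> real"
  shows "(\<Sum>i\<in>A. \<Sum>k\<in>A. a i * a i * a k * a k) = (\<Sum>i\<in>A. (a i)^2)^2"
  by (simp add: power2_eq_square sum_distrib_left sum_distrib_right mult_ac)

lemma quartic:
  fixes f :: "'a \<Rightarrow> nat \<Rightarrow> real" and X :: "'a set" and n :: nat
  assumes finX: "finite X" and norm: "\<And>x. x \<in> X \<Longrightarrow> (\<Sum>i<n. (f x i)^2) = c"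
  shows "(3 * c^2 * real (card X))^2 \<le> (\<Sum>x\<in>X. \<Sum>y\<in>X. (\<Sum>i<n. f x i * f y i)^4) * (3 * real n^2 + 6 * real n)"
proof -
  define A where "A = {..<n}"
  have fin: "finite A" by (simp add: A_def)
  define P where "P = A\<times>A\<times>A\<times>A"
  define g where "g x p = (case p of (i,j,k,l) \<Rightarrow> f x i * f x j * f x k * f x l)" for x p
  define T where "T p = (\<Sum>x\<in>X. g x p)" for p
  have cs: "(\<Sum>p\<in>P. T p * Sd p)^2 \<le> (\<Sum>p\<in>P. (T p)^2) * (\<Sum>p\<in>P. (Sd p)^2)"
    by (rule CS_sum)
  have a: "(\<Sum>p\<in>P. (T p)^2) = (\<Sum>x\<in>X. \<Sum>y\<in>X. (\<Sum>i<n. f x i * f y i)^4)"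
  proof -
    have "(\<Sum>p\<in>P. (T p)^2) = (\<Sum>p\<in>P. \<Sum>x\<in>X. \<Sum>y\<in>X. g x p * g y p)"
      unfolding T_def by (simp add: power2_eq_square sum_product)
    also have "\<dots> = (\<Sum>x\<in>X. \<Sum>y\<in>X. \<Sum>p\<in>P. g x p * g y p)"
      by (simp add: sum.swap[of _ P] sum.swap[of _ P X])
    also have "\<dots> = (\<Sum>x\<in>X. \<Sum>y\<in>X. (\<Sum>i<n. f x i * f y i)^4)"
    proof (intro sum.cong refl)
      fix x y
      show "(\<Sum>p\<in>P. g x p * g y p) = (\<Sum>i<n. f x i * f y i)^4"
        unfolding P_def sum4 pow4_sum A_def g_def by (simp add: mult_ac)
    qed
    finally show ?thesis .
  qed
  have b: "(\<Sum>p\<in>P. T p * Sd p) = 3 * c^2 * real (card X)"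
  proof -
    have "(\<Sum>p\<in>P. T p * Sd p) = (\<Sum>x\<in>X. \<Sum>p\<in>P. g x p * Sd p)"
      unfolding T_def by (simp add: sum_distrib_right sum.swap[of _ P])
    also have "\<dots> = (\<Sum>x\<in>X. 3 * c^2)"
    proof (intro sum.cong refl)
      fix x assume x: "x \<in> X"
      have e: "(\<Sum>i\<in>A. (f x i)^2) = c" using norm[OF x] by (simp add: A_def)
      have "(\<Sum>p\<in>P. g x p * Sd p) = (\<Sum>i\<in>A. \<Sum>k\<in>A. f x i * f x i * f x k * f x k)
         + (\<Sum>i\<in>A. \<Sum>k\<in>A. f x i * f x k * f x i * f x k) + (\<Sum>i\<in>A. \<Sum>k\<in>A. f x i * f x k * f x k * f x i)"
        unfolding P_def A_def delta_sum by (simp add: g_def)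
      also have "\<dots> = 3 * (\<Sum>i\<in>A. \<Sum>k\<in>A. f x i * f x i * f x k * f x k)"
        by (simp add: mult_ac)
      also have "\<dots> = 3 * c^2" unfolding sum_sq_c e ..
      finally show "(\<Sum>p\<in>P. g x p * Sd p) = 3 * c^2" .
    qed
    also have "\<dots> = 3 * c^2 * real (card X)" by simp
    finally show ?thesis .
  qed
  have c: "(\<Sum>p\<in>P. (Sd p)^2) = 3 * real n^2 + 6 * real n"
  proof -
    have dd: "\<And>i j. dl i j * dl j i = dl i j * dl i j" "\<And>i. dl i i = 1"
      by (auto simp: dl_def)
    have s1: "(\<Sum>i\<in>A. \<Sum>k\<in>A. 2 * (dl i k * dl i k) + 1) = real n^2 + 2 * real n"
    proof -
      have "(\<Sum>i\<in>A. \<Sum>k\<in>A. 2 * (dl i k * dl i k) + 1) = (\<Sum>i\<in>A. real n + 2)"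
      proof (intro sum.cong refl)
        fix i assume i: "i \<in> A"
        have "(\<Sum>k\<in>A. dl i k * dl i k) = dl i i" using dl_h2[OF fin i, of "dl i"] .
        then show "(\<Sum>k\<in>A. 2 * (dl i k * dl i k) + 1) = real n + 2"
          by (simp add: sum.distrib sum_distrib_left[symmetric] A_def dd)
      qed
      then show ?thesis by (simp add: A_def power2_eq_square algebra_simps)
    qed
    have "(\<Sum>p\<in>P. (Sd p)^2) = (\<Sum>p\<in>P. Sd p * Sd p)" by (simp add: power2_eq_square)
    also have "\<dots> = 3 * (\<Sum>i\<in>A. \<Sum>k\<in>A. 2 * (dl i k * dl i k) + 1)"
      unfolding P_def A_def delta_sum unfolding A_def[symmetric]
      by (simp add: Sd_def dd mult_ac)
    also have "\<dots> = 3 * real n^2 + 6 * real n" unfolding s1 by simp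
    finally show ?thesis .
  qed
  show ?thesis using cs unfolding a b c .
qed


lemma mult_T_entry:
  assumes "A \<in> carrier_mat n k" "B \<in> carrier_mat n2 k" "r < n" "s < n2"
  shows "(A * transpose_mat B) $$ (r,s) = (\<Sum>i<k. A $$ (r,i) * B $$ (s,i))"
  using assms by (simp add: scalar_prod_def lessThan_atLeast0)

lemma weighing_ip:
  assumes "weighing_matrix n k W" "r < n" "s < n"
  shows "(\<Sum>i<n. W $$ (r,i) * W $$ (s,i)) = real k * dl r s"
proof -
  have c: "W \<in> carrier_mat n n" and e: "W * transpose_mat W = of_nat k \<cdot>\<^sub>m 1\<^sub>m n"
    using assms(1) unfolding weighing_matrix_def by auto
  have "(\<Sum>i<n. W $$ (r,i) * W $$ (s,i)) = (W * transpose_mat W) $$ (r,s)"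
    using mult_T_entry[OF c c assms(2,3)] by simp
  also have "\<dots> = real k * dl r s" unfolding e using assms(2,3) by (simp add: dl_def)
  finally show ?thesis .
qed

lemma weighing_entry:
  assumes "weighing_matrix n k W" "r < n" "s < n"
  shows "W $$ (r,s) \<in> {1,-1,0}"
  using assms unfolding weighing_matrix_def by auto

lemma sqrt9: "sqrt (real (9::nat)) = 3"
proof -
  have "real (9::nat) = 3^2" by simp
  then show ?thesis by (simp only: real_sqrt_abs)
qed

lemma quart_pair:
  fixes v :: "nat \<Rightarrow> nat \<Rightarrow> real"
  assumes "\<And>r s. r < n \<Longrightarrow> s < n \<Longrightarrow> v r s \<in> {0,3,-3}"
    and "(\<Sum>r<n. \<Sum>s<n. (v r s)^2) = 81 * real n"
  shows "(\<Sum>r<n. \<Sum>s<n. (v r s)^4) = 729 * real n"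
proof -
  have "(\<Sum>r<n. \<Sum>s<n. (v r s)^4) = (\<Sum>r<n. \<Sum>s<n. 9 * (v r s)^2)"
  proof (intro sum.cong refl)
    fix r s assume "r \<in> {..<n}" "s \<in> {..<n}"
    then have "v r s \<in> {0,3,-3}" using assms(1) by auto
    then show "(v r s)^4 = 9 * (v r s)^2" by auto
  qed
  also have "\<dots> = 9 * (\<Sum>r<n. \<Sum>s<n. (v r s)^2)" by (simp add: sum_distrib_left)
  finally show ?thesis using assms(2) by simp
qed

lemma sum_dl_sq:
  fixes c :: real
  assumes "r < n"
  shows "(\<Sum>s<n. (c * dl r s)^2) = c^2"
proof -
  have "(\<Sum>s<n. (c * dl r s)^2) = (\<Sum>s<n. dl r s * c^2)"
    by (rule sum.cong) (auto simp: dl_def)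
  also have "\<dots> = c^2" using dl_h2[of "{..<n}" r "\<lambda>_. c^2"] assms by simp
  finally show ?thesis .
qed

lemma sum_dl_pow4:
  fixes c :: real
  assumes "r < n"
  shows "(\<Sum>s<n. (c * dl r s)^4) = c^4"
proof -
  have "(\<Sum>s<n. (c * dl r s)^4) = (\<Sum>s<n. dl r s * c^4)"
    by (rule sum.cong) (auto simp: dl_def)
  also have "\<dots> = c^4" using dl_h2[of "{..<n}" r "\<lambda>_. c^4"] assms by simp
  finally show ?thesis .
qed

lemma sum_if_card:
  fixes P R :: real
  assumes "finite B" "a \<in> B"
  shows "(\<Sum>b\<in>B. if a = b then P else R) = P + (real (card B) - 1) * R"
proof -
  have "(\<Sum>b\<in>B. if a = b then P else R) = (\<Sum>b\<in>B. R + (if a = b then P - R else 0))"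
    by (rule sum.cong) auto
  also have "\<dots> = real (card B) * R + (P - R)" using assms by (simp add: sum.distrib sum.delta)
  finally show ?thesis by (simp add: algebra_simps)
qed


definition fv :: "real mat option \<times> nat \<Rightarrow> nat \<Rightarrow> real" where
  "fv x i = (case fst x of None \<Rightarrow> 3 * dl (snd x) i | Some W \<Rightarrow> W $$ (snd x, i))"

lemma dl_sym: "dl i j = dl j i" by (simp add: dl_def)

lemma unb_U:
  assumes "unbiased n 9 W1 W2"
  shows "weighing_matrix n 9 ((1/3) \<cdot>\<^sub>m (W1 * transpose_mat W2))"
  using assms unfolding unbiased_def sqrt9 by simp

lemma pair_Q:
  assumes mu: "mutually_unbiased n 9 S" and a: "a \<in> insert None (Some ` S)" and b: "b \<in> insert None (Some ` S)"
  shows "(\<Sum>r<n. \<Sum>s<n. (\<Sum>i<n. fv (a,r) i * fv (b,s) i)^4) = (if a = b then 6561 * real n else 729 * real n)"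
proof -
  have wS: "\<And>W. W \<in> S \<Longrightarrow> weighing_matrix n 9 W" using mu unfolding mutually_unbiased_def by auto
  have uS: "\<And>W1 W2. W1 \<in> S \<Longrightarrow> W2 \<in> S \<Longrightarrow> W1 \<noteq> W2 \<Longrightarrow> unbiased n 9 W1 W2"
    using mu unfolding mutually_unbiased_def by auto
  have NN: "\<And>r s. r < n \<Longrightarrow> s < n \<Longrightarrow> (\<Sum>i<n. (3 * dl r i) * (3 * dl s i)) = 9 * dl r s"
  proof -
    fix r s assume r: "r < n" and s: "s < n"
    have "(\<Sum>i<n. (3 * dl r i) * (3 * dl s i)) = (\<Sum>i<n. dl r i * (9 * dl s i))"
      by (rule sum.cong) (auto simp: dl_def)
    also have "\<dots> = 9 * dl s r" using dl_h2[of "{..<n}" r "\<lambda>i. 9 * dl s i"] r by simp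
    finally show "(\<Sum>i<n. (3 * dl r i) * (3 * dl s i)) = 9 * dl r s" by (simp add: dl_sym)
  qed
  have NW: "\<And>r s W. r < n \<Longrightarrow> (\<Sum>i<n. (3 * dl r i) * W $$ (s,i)) = 3 * W $$ (s,r)"
  proof -
    fix r s and W :: "real mat" assume r: "r < n"
    have "(\<Sum>i<n. (3 * dl r i) * W $$ (s,i)) = (\<Sum>i<n. dl r i * (3 * W $$ (s,i)))"
      by (rule sum.cong) (auto simp: dl_def)
    also have "\<dots> = 3 * W $$ (s,r)" using dl_h2[of "{..<n}" r "\<lambda>i. 3 * W $$ (s,i)"] r by simp
    finally show "(\<Sum>i<n. (3 * dl r i) * W $$ (s,i)) = 3 * W $$ (s,r)" .
  qed
  have WN: "\<And>r s W. s < n \<Longrightarrow> (\<Sum>i<n. W $$ (r,i) * (3 * dl s i)) = 3 * W $$ (r,s)"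
    using NW by (simp add: mult.commute)
  have rowsq: "\<And>W r. W \<in> S \<Longrightarrow> r < n \<Longrightarrow> (\<Sum>i<n. (W $$ (r,i))^2) = 9"
    using weighing_ip[OF wS] by (simp add: power2_eq_square dl_def)
  show ?thesis
  proof (cases "a = b")
    case True
    have "\<And>r s. r < n \<Longrightarrow> s < n \<Longrightarrow> (\<Sum>i<n. fv (a,r) i * fv (b,s) i) = 9 * dl r s"
    proof -
      fix r s assume r: "r < n" and s: "s < n"
      show "(\<Sum>i<n. fv (a,r) i * fv (b,s) i) = 9 * dl r s"
      proof (cases a)
        case None then show ?thesis using True NN[OF r s] by (simp add: fv_def)
      next
        case (Some W)
        then have "W \<in> S" using a by auto
        moreover have "b = Some W" using True Some by simp
        ultimately show ?thesis using Some weighing_ip[OF wS r s] by (simp add: fv_def)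
      qed
    qed
    then have "(\<Sum>r<n. \<Sum>s<n. (\<Sum>i<n. fv (a,r) i * fv (b,s) i)^4) = (\<Sum>r<n. \<Sum>s<n. (9 * dl r s)^4)"
      by (intro sum.cong refl) auto
    also have "\<dots> = (\<Sum>r<n. 6561)"
    proof (intro sum.cong refl)
      fix r assume "r \<in> {..<n}"
      then show "(\<Sum>s<n. (9 * dl r s)^4) = 6561" using sum_dl_pow4[of r n 9] by simp
    qed
    finally show ?thesis using True by simp
  next
    case False
    define v where "v r s = (\<Sum>i<n. fv (a,r) i * fv (b,s) i)" for r s
    have vv: "(\<forall>r<n. \<forall>s<n. v r s \<in> {0,3,-3}) \<and> (\<Sum>r<n. \<Sum>s<n. (v r s)^2) = 81 * real n"
    proof (cases a)
      case None
      then obtain W where b': "b = Some W" "W \<in> S" using False b by auto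
      have ve: "\<And>r s. r < n \<Longrightarrow> v r s = 3 * W $$ (s,r)"
        unfolding v_def using None b' NW by (simp add: fv_def)
      have "\<forall>r<n. \<forall>s<n. v r s \<in> {0,3,-3}"
      proof (intro allI impI)
        fix r s assume rs: "r < n" "s < n"
        have "W $$ (s,r) \<in> {1,-1,0}" by (rule weighing_entry[OF wS[OF b'(2)] rs(2) rs(1)])
        then show "v r s \<in> {0,3,-3}" using ve[OF rs(1)] by auto
      qed
      moreover have "(\<Sum>r<n. \<Sum>s<n. (v r s)^2) = 81 * real n"
      proof -
        have "(\<Sum>r<n. \<Sum>s<n. (v r s)^2) = (\<Sum>r<n. \<Sum>s<n. 9 * (W $$ (s,r))^2)"
          by (intro sum.cong refl) (simp add: ve power_mult_distrib)
        also have "\<dots> = 9 * (\<Sum>r<n. \<Sum>s<n. (W $$ (s,r))^2)"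
          by (simp add: sum_distrib_left)
        also have "\<dots> = 9 * (\<Sum>s<n. \<Sum>r<n. (W $$ (s,r))^2)"
          using sum.swap[of "\<lambda>r s. (W $$ (s,r))^2" "{..<n}" "{..<n}"] by simp
        also have "\<dots> = 9 * (\<Sum>s<n. 9)" using rowsq[OF b'(2)] by simp
        finally show ?thesis by simp
      qed
      ultimately show ?thesis by blast
    next
      case (Some W1)
      note aS = Some
      then have W1: "W1 \<in> S" using a by auto
      show ?thesis
      proof (cases b)
        case None
        have ve: "\<And>r s. s < n \<Longrightarrow> v r s = 3 * W1 $$ (r,s)"
          unfolding v_def using None aS WN by (simp add: fv_def)
        have "\<forall>r<n. \<forall>s<n. v r s \<in> {0,3,-3}"
        proof (intro allI impI)
          fix r s assume rs: "r < n" "s < n"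
          have "W1 $$ (r,s) \<in> {1,-1,0}" by (rule weighing_entry[OF wS[OF W1] rs])
          then show "v r s \<in> {0,3,-3}" using ve[OF rs(2)] by auto
        qed
        moreover have "(\<Sum>r<n. \<Sum>s<n. (v r s)^2) = 81 * real n"
        proof -
          have "(\<Sum>r<n. \<Sum>s<n. (v r s)^2) = (\<Sum>r<n. 9 * (\<Sum>s<n. (W1 $$ (r,s))^2))"
            by (intro sum.cong refl) (simp add: ve power_mult_distrib sum_distrib_left)
          also have "\<dots> = (\<Sum>r<n. 81)" using rowsq[OF W1] by simp
          finally show ?thesis by simp
        qed
        ultimately show ?thesis by blast
      next
        case (Some W2)
        note bS = Some
        then have W2: "W2 \<in> S" using b by auto
        have ne: "W1 \<noteq> W2" using False aS bS by auto
        define U where "U = (1/3) \<cdot>\<^sub>m (W1 * transpose_mat W2)"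
        have wU: "weighing_matrix n 9 U" unfolding U_def by (rule unb_U[OF uS[OF W1 W2 ne]])
        have c1: "W1 \<in> carrier_mat n n" and c2: "W2 \<in> carrier_mat n n"
          using wS[OF W1] wS[OF W2] unfolding weighing_matrix_def by auto
        have ve: "\<And>r s. r < n \<Longrightarrow> s < n \<Longrightarrow> v r s = 3 * U $$ (r,s)"
          unfolding v_def U_def using aS bS c1 c2 mult_T_entry[OF c1 c2] by (simp add: fv_def)
        have "\<forall>r<n. \<forall>s<n. v r s \<in> {0,3,-3}"
        proof (intro allI impI)
          fix r s assume rs: "r < n" "s < n"
          have "U $$ (r,s) \<in> {1,-1,0}" by (rule weighing_entry[OF wU rs])
          then show "v r s \<in> {0,3,-3}" using ve[OF rs] by auto
        qed
        moreover have "(\<Sum>r<n. \<Sum>s<n. (v r s)^2) = 81 * real n"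
        proof -
          have "(\<Sum>r<n. \<Sum>s<n. (v r s)^2) = (\<Sum>r<n. 9 * (\<Sum>s<n. U $$ (r,s) * U $$ (r,s)))"
            by (intro sum.cong refl) (simp add: ve power_mult_distrib sum_distrib_left power2_eq_square)
          also have "\<dots> = (\<Sum>r<n. 81)" using weighing_ip[OF wU] by (simp add: dl_def)
          finally show ?thesis by simp
        qed
        ultimately show ?thesis by blast
      qed
    qed
    have "(\<Sum>r<n. \<Sum>s<n. (v r s)^4) = 729 * real n"
      by (rule quart_pair) (use vv in auto)
    then show ?thesis using False unfolding v_def by simp
  qed
qed


lemma sum2:
  "(\<Sum>p\<in>A\<times>B. F p) = (\<Sum>i\<in>A. \<Sum>j\<in>B. F (i,j))"
  unfolding sum.cartesian_product by (simp add: split_def)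

lemma mu_bound:
  assumes finS: "finite S" and mu: "mutually_unbiased n 9 S" and n: "n > 0"
  shows "27 * (card S + 1) \<le> (9 + card S) * (n + 2)"
proof -
  define B where "B = insert None (Some ` S)"
  have finB: "finite B" using finS by (simp add: B_def)
  have cardB: "card B = card S + 1"
    unfolding B_def using finS by (simp add: card_image)
  define X where "X = B \<times> {..<n}"
  have finX: "finite X" using finB by (simp add: X_def)
  have cardX: "card X = card B * n" by (simp add: X_def card_cartesian_product)
  have wS: "\<And>W. W \<in> S \<Longrightarrow> weighing_matrix n 9 W" using mu unfolding mutually_unbiased_def by auto
  have norm: "\<And>x. x \<in> X \<Longrightarrow> (\<Sum>i<n. (fv x i)^2) = 9"
  proof -
    fix x assume "x \<in> X"
    then obtain a r where x: "x = (a,r)" "a \<in> B" "r < n" by (auto simp: X_def)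
    show "(\<Sum>i<n. (fv x i)^2) = 9"
    proof (cases a)
      case None
      then show ?thesis using x sum_dl_sq[of r n 3] by (simp add: fv_def)
    next
      case (Some W)
      then have "W \<in> S" using x by (auto simp: B_def)
      then show ?thesis using x Some weighing_ip[OF wS, of W r r] by (simp add: fv_def dl_def power2_eq_square)
    qed
  qed
  have q: "(3 * 9^2 * real (card X))^2 \<le> (\<Sum>x\<in>X. \<Sum>y\<in>X. (\<Sum>i<n. fv x i * fv y i)^4) * (3 * real n^2 + 6 * real n)"
    by (rule quartic[OF finX norm])
  have tot: "(\<Sum>x\<in>X. \<Sum>y\<in>X. (\<Sum>i<n. fv x i * fv y i)^4)
      = real (card B) * (6561 * real n + (real (card B) - 1) * (729 * real n))"
  proof -
    have "(\<Sum>x\<in>X. \<Sum>y\<in>X. (\<Sum>i<n. fv x i * fv y i)^4)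
       = (\<Sum>a\<in>B. \<Sum>r<n. \<Sum>b\<in>B. \<Sum>s<n. (\<Sum>i<n. fv (a,r) i * fv (b,s) i)^4)"
      unfolding X_def sum2 ..
    also have "\<dots> = (\<Sum>a\<in>B. \<Sum>b\<in>B. \<Sum>r<n. \<Sum>s<n. (\<Sum>i<n. fv (a,r) i * fv (b,s) i)^4)"
      by (intro sum.cong refl) (rule sum.swap)
    also have "\<dots> = (\<Sum>a\<in>B. \<Sum>b\<in>B. if a = b then 6561 * real n else 729 * real n)"
      by (intro sum.cong refl) (rule pair_Q[OF mu], auto simp: B_def)
    also have "\<dots> = (\<Sum>a\<in>B. 6561 * real n + (real (card B) - 1) * (729 * real n))"
      by (intro sum.cong refl) (rule sum_if_card[OF finB])
    also have "\<dots> = real (card B) * (6561 * real n + (real (card B) - 1) * (729 * real n))"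
      by simp
    finally show ?thesis .
  qed
  define k where "k = real (card B)"
  have k: "k = real (card S) + 1" using cardB by (simp add: k_def)
  have kpos: "k > 0" using k by simp
  have npos: "real n > 0" using n by simp
  have "(243 * (k * real n))^2 \<le> k * (6561 * real n + (k - 1) * (729 * real n)) * (3 * real n^2 + 6 * real n)"
    using q unfolding tot cardX k_def by simp
  then have "(k * real n^2 * 2187) * (27 * k) \<le> (k * real n^2 * 2187) * ((9 + (k - 1)) * (real n + 2))"
    by (simp add: power2_eq_square algebra_simps)
  then have "27 * k \<le> (9 + (k - 1)) * (real n + 2)"
    using kpos npos by (simp add: mult_le_cancel_left_pos) (simp add: mult.commute)
  then have "real (27 * (card S + 1)) \<le> real ((9 + card S) * (n + 2))"
    unfolding k by (simp add: algebra_simps)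
  then show ?thesis by (simp only: of_nat_le_iff)
qed


lemma smult_smult_mat: "(a::real) \<cdot>\<^sub>m (b \<cdot>\<^sub>m A) = (a * b) \<cdot>\<^sub>m A"
  by (rule eq_matI) auto

lemma transpose_smult: "transpose_mat ((a::real) \<cdot>\<^sub>m A) = a \<cdot>\<^sub>m transpose_mat A"
  by (rule eq_matI) auto

lemma one_smult_mat': "(1::real) \<cdot>\<^sub>m A = A"
  by (rule eq_matI) auto

lemma weighing_TW:
  assumes "weighing_matrix n 9 W"
  shows "transpose_mat W * W = 9 \<cdot>\<^sub>m 1\<^sub>m n"
proof -
  have c: "W \<in> carrier_mat n n" and e: "W * transpose_mat W = 9 \<cdot>\<^sub>m 1\<^sub>m n"
    using assms unfolding weighing_matrix_def by auto
  have ct: "transpose_mat W \<in> carrier_mat n n" using c by simp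
  have c9: "(1/9) \<cdot>\<^sub>m W \<in> carrier_mat n n" using c by simp
  have "((1/9) \<cdot>\<^sub>m W) * transpose_mat W = 1\<^sub>m n"
    using c e by (simp add: mult_smult_assoc_mat smult_smult_mat one_smult_mat')
  then have "transpose_mat W * ((1/9) \<cdot>\<^sub>m W) = 1\<^sub>m n"
    by (rule mat_mult_left_right_inverse[OF c9 ct])
  then have "(1/9) \<cdot>\<^sub>m (transpose_mat W * W) = 1\<^sub>m n"
    using c ct by (simp add: mult_smult_distrib)
  then have "9 \<cdot>\<^sub>m ((1/9) \<cdot>\<^sub>m (transpose_mat W * W)) = 9 \<cdot>\<^sub>m 1\<^sub>m n" by simp
  then show ?thesis by (simp add: smult_smult_mat one_smult_mat')
qed

lemma unbiased_from_entries:
  assumes w1: "weighing_matrix n 9 W1" and w2: "weighing_matrix n 9 W2"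
    and ent: "\<And>i j. i < n \<Longrightarrow> j < n \<Longrightarrow> (W1 * transpose_mat W2) $$ (i,j) \<in> {0,3,-3}"
  shows "unbiased n 9 W1 W2"
proof -
  have c1: "W1 \<in> carrier_mat n n" and e1: "W1 * transpose_mat W1 = 9 \<cdot>\<^sub>m 1\<^sub>m n"
    using w1 unfolding weighing_matrix_def by auto
  have c2: "W2 \<in> carrier_mat n n"
    using w2 unfolding weighing_matrix_def by auto
  have t2: "transpose_mat W2 * W2 = 9 \<cdot>\<^sub>m 1\<^sub>m n" by (rule weighing_TW[OF w2])
  define P where "P = W1 * transpose_mat W2"
  have cP: "P \<in> carrier_mat n n" using c1 c2 by (simp add: P_def)
  define U where "U = (1/3) \<cdot>\<^sub>m P"
  have cU: "U \<in> carrier_mat n n" using cP by (simp add: U_def)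
  have PP: "P * transpose_mat P = 81 \<cdot>\<^sub>m 1\<^sub>m n"
  proof -
    have "transpose_mat P = W2 * transpose_mat W1"
      unfolding P_def using c1 c2 by (simp add: transpose_mult)
    then have "P * transpose_mat P = W1 * transpose_mat W2 * (W2 * transpose_mat W1)"
      by (simp add: P_def)
    also have "\<dots> = W1 * (transpose_mat W2 * W2) * transpose_mat W1"
      using c1 c2 by (simp add: assoc_mult_mat[of _ n n _ n _ n])
    also have "\<dots> = W1 * (9 \<cdot>\<^sub>m 1\<^sub>m n) * transpose_mat W1" unfolding t2 ..
    also have "\<dots> = 9 \<cdot>\<^sub>m (W1 * transpose_mat W1)"
    proof -
      have "W1 * (9 \<cdot>\<^sub>m 1\<^sub>m n) = 9 \<cdot>\<^sub>m W1"
        using c1 by (simp add: mult_smult_distrib[of _ n n _ n])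
      then show ?thesis using c1 by (simp add: mult_smult_assoc_mat)
    qed
    also have "\<dots> = 81 \<cdot>\<^sub>m 1\<^sub>m n" unfolding e1 by (simp add: smult_smult_mat)
    finally show ?thesis .
  qed
  have UU: "U * transpose_mat U = 9 \<cdot>\<^sub>m 1\<^sub>m n"
  proof -
    have "U * transpose_mat U = (1/3) \<cdot>\<^sub>m P * ((1/3) \<cdot>\<^sub>m transpose_mat P)"
      unfolding U_def by (simp add: transpose_smult)
    also have "\<dots> = (1/3) \<cdot>\<^sub>m (P * ((1/3) \<cdot>\<^sub>m transpose_mat P))"
      using cP by (simp add: mult_smult_assoc_mat[of P n n "(1/3) \<cdot>\<^sub>m transpose_mat P" n])
    also have "\<dots> = (1/3) \<cdot>\<^sub>m ((1/3) \<cdot>\<^sub>m (P * transpose_mat P))"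
      using cP by (simp add: mult_smult_distrib[of P n n "transpose_mat P" n])
    also have "\<dots> = (1/9) \<cdot>\<^sub>m (P * transpose_mat P)"
      by (simp add: smult_smult_mat)
    also have "\<dots> = 9 \<cdot>\<^sub>m 1\<^sub>m n" unfolding PP by (simp add: smult_smult_mat)
    finally show ?thesis .
  qed
  have entU: "\<forall>i<n. \<forall>j<n. U $$ (i,j) \<in> {1,-1,0}"
  proof (intro allI impI)
    fix i j assume ij: "i < n" "j < n"
    have "P $$ (i,j) \<in> {0,3,-3}" using ent[OF ij] by (simp add: P_def)
    then show "U $$ (i,j) \<in> {1,-1,0}" using ij cP by (auto simp: U_def)
  qed
  have "weighing_matrix n 9 U" unfolding weighing_matrix_def using cU entU UU by simp
  then show ?thesis unfolding unbiased_def sqrt9 using w1 w2 by (simp add: U_def P_def)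
qed

definition mk :: "nat \<Rightarrow> int list list \<Rightarrow> real mat" where
  "mk n M = mat n n (\<lambda>(i,j). real_of_int (M ! i ! j))"
definition dotl :: "int list \<Rightarrow> int list \<Rightarrow> int" where
  "dotl xs ys = sum_list (map2 (*) xs ys)"
definition prodl :: "int list list \<Rightarrow> int list list \<Rightarrow> int list list" where
  "prodl A B = map (\<lambda>r. map (dotl r) B) A"
definition wfl :: "nat \<Rightarrow> int list list \<Rightarrow> bool" where
  "wfl n M = (length M = n \<and> list_all (\<lambda>r. length r = n \<and> list_all (\<lambda>x. x \<in> {-1,0,1}) r) M)"
definition idl :: "nat \<Rightarrow> int list list" where
  "idl n = map (\<lambda>i. map (\<lambda>j. if i = j then 9 else 0) [0..<n]) [0..<n]"
definition check_w :: "nat \<Rightarrow> int list list \<Rightarrow> bool" where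
  "check_w n M = (wfl n M \<and> prodl M M = idl n)"
definition check_u :: "int list list \<Rightarrow> int list list \<Rightarrow> bool" where
  "check_u A B = list_all (list_all (\<lambda>x. x \<in> {0,3,-3})) (prodl A B)"
definition check_all :: "nat \<Rightarrow> int list list list \<Rightarrow> bool" where
  "check_all n Ms = (list_all (check_w n) Ms \<and>
     list_all (\<lambda>(a,b). a = b \<or> check_u (Ms!a) (Ms!b)) (List.product [0..<length Ms] [0..<length Ms]))"

lemma dotl_sum:
  assumes "length xs = n" "length ys = n"
  shows "dotl xs ys = (\<Sum>k<n. xs!k * ys!k)"
  using assms unfolding dotl_def by (simp add: sum_list_sum_nth lessThan_atLeast0)

lemma wfl_D:
  assumes "wfl n M" "i < n"
  shows "length (M!i) = n" "\<And>j. j < n \<Longrightarrow> M!i!j \<in> {-1,0,1}"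
  using assms unfolding wfl_def list_all_length by auto

lemma mk_prod:
  assumes "wfl n A" "wfl n B" "i < n" "j < n"
  shows "(mk n A * transpose_mat (mk n B)) $$ (i,j) = real_of_int (prodl A B ! i ! j)"
proof -
  have lA: "length A = n" and lB: "length B = n" using assms(1,2) by (auto simp: wfl_def)
  have "(mk n A * transpose_mat (mk n B)) $$ (i,j) = (\<Sum>k<n. mk n A $$ (i,k) * mk n B $$ (j,k))"
    by (rule mult_T_entry) (use assms in \<open>auto simp: mk_def\<close>)
  also have "\<dots> = (\<Sum>k<n. real_of_int (A!i!k * B!j!k))"
    using assms by (simp add: mk_def)
  also have "\<dots> = real_of_int (dotl (A!i) (B!j))"
    using dotl_sum[OF wfl_D(1)[OF assms(1,3)] wfl_D(1)[OF assms(2,4)]] by simp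
  also have "\<dots> = real_of_int (prodl A B ! i ! j)"
    using assms lA lB by (simp add: prodl_def)
  finally show ?thesis .
qed

lemma check_w_weighing:
  assumes "check_w n M"
  shows "weighing_matrix n 9 (mk n M)"
proof -
  have w: "wfl n M" and p: "prodl M M = idl n" using assms by (auto simp: check_w_def)
  have c: "mk n M \<in> carrier_mat n n" by (simp add: mk_def)
  have ent: "\<forall>i<n. \<forall>j<n. mk n M $$ (i,j) \<in> {1,-1,0}"
  proof (intro allI impI)
    fix i j assume ij: "i < n" "j < n"
    then have "M!i!j \<in> {-1,0,1}" using wfl_D(2)[OF w] by blast
    then show "mk n M $$ (i,j) \<in> {1,-1,0}" using ij by (auto simp: mk_def)
  qed
  have "mk n M * transpose_mat (mk n M) = of_nat 9 \<cdot>\<^sub>m 1\<^sub>m n"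
  proof (rule eq_matI)
    fix i j assume ij: "i < dim_row (of_nat 9 \<cdot>\<^sub>m 1\<^sub>m n :: real mat)" "j < dim_col (of_nat 9 \<cdot>\<^sub>m 1\<^sub>m n :: real mat)"
    then have ij': "i < n" "j < n" by auto
    show "(mk n M * transpose_mat (mk n M)) $$ (i,j) = (of_nat 9 \<cdot>\<^sub>m 1\<^sub>m n :: real mat) $$ (i,j)"
      unfolding mk_prod[OF w w ij'] p using ij' by (simp add: idl_def)
  qed (auto simp: mk_def)
  then show ?thesis unfolding weighing_matrix_def using c ent by simp
qed

lemma check_u_entries:
  assumes "wfl n A" "wfl n B" "check_u A B" "i < n" "j < n"
  shows "(mk n A * transpose_mat (mk n B)) $$ (i,j) \<in> {0,3,-3}"
proof -
  have lA: "length A = n" and lB: "length B = n" using assms(1,2) by (auto simp: wfl_def)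
  have "prodl A B ! i ! j \<in> {0,3,-3}"
    using assms(3,4,5) lA lB unfolding check_u_def list_all_length by (auto simp: prodl_def)
  then show ?thesis unfolding mk_prod[OF assms(1,2,4,5)] by auto
qed

lemma check_all_mu:
  assumes "check_all n Ms" "n > 0"
  shows "mutually_unbiased n 9 (set (map (mk n) Ms)) \<and> card (set (map (mk n) Ms)) = length Ms"
proof -
  have cw: "\<And>a. a < length Ms \<Longrightarrow> check_w n (Ms!a)"
    using assms(1) unfolding check_all_def list_all_length by auto
  have cu: "\<And>a b. a < length Ms \<Longrightarrow> b < length Ms \<Longrightarrow> a \<noteq> b \<Longrightarrow> check_u (Ms!a) (Ms!b)"
    using assms(1) unfolding check_all_def list_all_iff by fastforce
  have wf: "\<And>a. a < length Ms \<Longrightarrow> wfl n (Ms!a)" using cw by (simp add: check_w_def)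
  have wm: "\<And>a. a < length Ms \<Longrightarrow> weighing_matrix n 9 (mk n (Ms!a))"
    using cw check_w_weighing by blast
  have ub: "\<And>a b. a < length Ms \<Longrightarrow> b < length Ms \<Longrightarrow> a \<noteq> b \<Longrightarrow> unbiased n 9 (mk n (Ms!a)) (mk n (Ms!b))"
    by (rule unbiased_from_entries[OF wm wm], assumption+, rule check_u_entries[OF wf wf cu]) 
  have ne: "\<And>a b. a < length Ms \<Longrightarrow> b < length Ms \<Longrightarrow> a \<noteq> b \<Longrightarrow> mk n (Ms!a) \<noteq> mk n (Ms!b)"
  proof
    fix a b assume ab: "a < length Ms" "b < length Ms" "a \<noteq> b" and eq: "mk n (Ms!a) = mk n (Ms!b)"
    have "(mk n (Ms!a) * transpose_mat (mk n (Ms!b))) $$ (0,0) \<in> {0,3,-3}"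
      by (rule check_u_entries[OF wf[OF ab(1)] wf[OF ab(2)] cu[OF ab] assms(2) assms(2)])
    moreover have "(mk n (Ms!a) * transpose_mat (mk n (Ms!a))) $$ (0,0) = 9"
      using wm[OF ab(1)] assms(2) unfolding weighing_matrix_def by simp
    ultimately show False using eq by auto
  qed
  have dist: "distinct (map (mk n) Ms)"
    unfolding distinct_conv_nth using ne by auto
  have mu: "mutually_unbiased n 9 (set (map (mk n) Ms))"
    unfolding mutually_unbiased_def
  proof (intro conjI ballI impI)
    fix W assume "W \<in> set (map (mk n) Ms)"
    then obtain a where "a < length Ms" "W = mk n (Ms!a)" by (auto simp: in_set_conv_nth)
    then show "weighing_matrix n 9 W" using wm by simp
  next
    fix W1 W2 assume "W1 \<in> set (map (mk n) Ms)" "W2 \<in> set (map (mk n) Ms)" "W1 \<noteq> W2"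
    obtain a where a: "a < length Ms" "W1 = mk n (Ms!a)" using \<open>W1 \<in> set (map (mk n) Ms)\<close>
      by (auto simp: in_set_conv_nth)
    obtain b where b: "b < length Ms" "W2 = mk n (Ms!b)" using \<open>W2 \<in> set (map (mk n) Ms)\<close>
      by (auto simp: in_set_conv_nth)
    have "a \<noteq> b" using a b \<open>W1 \<noteq> W2\<close> by auto
    then show "unbiased n 9 W1 W2" using ub a b by simp
  qed
  show ?thesis using mu distinct_card[OF dist] by simp
qed

definition M18 :: "int list list list" where "M18 = [[[0,1,0,-1,0,0,-1,0,0,1,-1,0,0,0,-1,1,1,1], [0,1,0,1,0,0,-1,0,-1,-1,1,-1,1,0,-1,0,0,0], [0,1,-1,0,0,-1,1,1,-1,0,0,1,0,0,0,-1,0,1], [1,0,0,0,-1,1,1,0,-1,0,0,-1,-1,1,0,0,1,0], [1,0,1,1,0,0,0,1,1,0,0,1,1,1,0,0,1,0], [1,0,-1,0,0,0,1,0,0,0,-1,0,1,0,-1,1,-1,-1], [0,0,1,0,1,-1,1,0,0,-1,-1,-1,0,-1,0,0,1,0], [0,1,1,0,-1,0,0,0,-1,0,0,1,0,-1,1,1,0,-1], [1,0,1,0,0,0,0,-1,0,-1,0,1,-1,0,-1,0,-1,1], [0,1,0,1,-1,0,0,0,1,0,-1,-1,0,0,1,0,-1,1], [1,1,0,-1,1,1,0,-1,0,0,0,0,1,0,1,-1,0,0], [1,0,-1,0,1,0,-1,1,0,-1,0,0,-1,0,1,1,0,0], [1,-1,0,1,0,0,-1,0,-1,1,-1,0,0,-1,0,-1,0,0],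 [1,0,-1,0,-1,-1,0,-1,1,0,1,0,0,-1,0,0,1,0], [1,0,1,-1,0,-1,0,1,0,1,1,-1,0,0,0,0,-1,0], [0,1,0,1,1,-1,0,-1,0,1,0,0,-1,1,0,0,0,-1], [0,0,0,1,1,1,1,0,0,1,1,0,0,-1,0,1,0,1], [0,1,0,0,0,1,0,1,1,0,0,0,-1,-1,-1,-1,0,-1]],
 [[1,0,1,0,1,0,-1,-1,1,1,-1,1,0,0,0,0,0,0], [1,0,-1,-1,1,1,1,1,0,0,0,1,0,-1,0,0,0,0], [0,1,1,-1,0,0,-1,0,-1,0,1,0,-1,-1,-1,0,0,0], [0,1,0,-1,-1,1,0,0,1,0,0,0,-1,1,1,-1,0,0], [1,0,0,1,0,-1,0,1,0,0,1,1,-1,1,0,0,-1,0], [1,-1,0,0,0,1,-1,0,0,0,1,-1,1,0,0,-1,-1,0], [1,0,-1,0,-1,0,-1,0,-1,1,0,0,0,0,1,1,1,0], [0,0,1,0,1,0,0,1,1,0,1,-1,0,0,1,1,1,0], [0,0,0,1,0,1,0,-1,0,-1,0,0,-1,-1,1,1,-1,0], [1,-1,0,-1,0,-1,1,-1,0,0,0,-1,-1,0,0,0,0,1], [1,1,0,0,1,0,0,0,-1,-1,-1,-1,0,1,0,0,0,-1], [0,0,0,1,0,1,0,1,0,1,-1,-1,-1,0,-1,0,0,1], [1,1,0,0,-1,0,0,0,1,-1,0,0,1,0,-1,1,0,1], [0,0,0,0,0,1,1,-1,0,1,1,0,0,1,-1,1,0,-1], [0,1,-1,0,0,-1,0,0,1,1,0,-1,0,-1,0,0,-1,-1],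 [0,1,1,0,0,0,1,0,-1,1,0,0,1,0,1,0,-1,1], [0,1,-1,1,1,0,0,-1,0,0,1,0,0,0,0,-1,1,1], [1,0,1,1,-1,0,1,0,0,0,0,0,0,-1,0,-1,1,-1]],
 [[1,0,-1,1,0,1,0,1,-1,0,-1,1,0,1,0,0,0,0], [1,0,-1,0,1,-1,0,0,-1,1,1,0,-1,-1,0,0,0,0], [1,-1,-1,-1,0,0,-1,-1,1,0,0,0,0,1,1,0,0,0], [0,0,0,0,1,0,1,-1,0,0,-1,1,1,-1,1,1,0,0], [0,1,-1,0,1,1,0,0,1,0,1,0,1,0,-1,0,-1,0], [1,-1,1,0,0,0,0,1,1,0,0,1,0,-1,0,-1,-1,0], [0,1,1,-1,0,0,0,0,0,1,0,1,-1,1,0,1,-1,0], [0,1,0,0,-1,0,0,0,0,1,1,1,1,0,1,-1,1,0], [1,0,1,0,1,0,1,-1,0,0,0,0,0,1,-1,-1,1,0], [0,0,1,0,1,1,-1,0,-1,-1,1,0,0,0,1,0,0,-1], [1,1,0,-1,0,0,1,1,0,-1,0,-1,0,0,1,0,0,1], [0,0,0,1,0,1,1,0,1,1,0,-1,-1,0,1,0,0,-1], [1,0,1,1,0,0,-1,0,0,1,0,-1,1,0,0,1,0,1], [0,1,0,0,0,1,-1,-1,0,0,-1,0,-1,-1,0,-1,0,1], [1,1,0,1,-1,-1,0,-1,0,-1,0,0,0,0,0,0,-1,-1], [0,1,0,0,1,-1,-1,1,1,0,-1,0,0,0,0,0,1,-1], [0,0,0,1,0,0,0,0,1,-1,1,1,-1,0,0,1,1,1],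 [1,0,0,-1,-1,1,0,0,0,0,0,0,0,-1,-1,1,1,-1]],
 [[1,0,0,-1,-1,-1,1,0,0,-1,-1,1,0,-1,0,0,0,0], [1,0,-1,0,0,0,1,-1,0,-1,1,-1,1,1,0,0,0,0], [0,1,0,0,1,0,0,1,1,-1,1,1,0,0,1,-1,0,0], [1,0,1,0,0,-1,-1,-1,0,0,1,0,-1,0,1,1,0,0], [1,0,-1,-1,0,0,0,1,1,1,0,-1,-1,0,0,0,1,0], [1,1,1,1,0,0,1,0,1,1,0,0,0,0,-1,0,-1,0], [0,1,1,-1,1,1,1,0,-1,0,0,0,0,0,0,1,1,0], [0,0,0,0,1,-1,0,1,0,0,-1,-1,1,0,1,1,-1,0], [0,0,0,1,-1,1,0,0,1,0,0,0,1,-1,1,1,1,0], [1,-1,0,0,0,0,0,1,-1,1,1,1,1,0,0,0,0,1], [0,1,-1,0,0,0,0,-1,0,1,-1,1,0,1,1,0,0,1], [0,1,1,-1,-1,0,-1,0,0,0,0,-1,1,0,0,-1,0,1], [1,-1,1,0,0,1,0,0,0,0,-1,0,0,1,1,-1,0,-1], [0,0,0,1,0,0,1,0,-1,0,0,-1,-1,-1,1,-1,0,1], [1,1,-1,0,0,1,-1,0,-1,0,0,0,0,-1,0,0,-1,-1], [0,1,0,1,-1,-1,0,1,-1,0,0,0,0,1,0,0,1,-1], [1,0,0,1,1,0,-1,0,0,-1,-1,0,0,0,-1,0,1,1], [0,0,0,0,1,-1,0,-1,0,1,0,0,1,-1,0,-1,1,-1]]]"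

lemma check18: "check_all 18 M18"
  by code_simp


lemma Wmax_range:
  assumes n: "n > 0" and bnd: "\<And>c::nat. 27 * (c + 1) \<le> (9 + c) * (n + 2) \<Longrightarrow> c \<le> hi"
    and chk: "check_all n Ms" and lo: "length Ms = lo"
  shows "W_max n 9 \<in> {lo..hi}"
proof -
  define A where "A = {card S | S. finite S \<and> mutually_unbiased n 9 S}"
  have sub: "A \<subseteq> {..hi}"
  proof
    fix c assume "c \<in> A"
    then obtain S where S: "c = card S" "finite S" "mutually_unbiased n 9 S" by (auto simp: A_def)
    show "c \<in> {..hi}" using bnd[OF mu_bound[OF S(2,3) n]] S(1) by simp
  qed
  have finA: "finite A" using sub finite_subset by blast
  have "lo \<in> A" unfolding A_def using check_all_mu[OF chk n] lo
    by (intro CollectI exI[of _ "set (map (mk n) Ms)"]) auto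
  then have "lo \<le> Max A" "Max A \<in> A" using finA by (auto intro: Max_ge Max_in)
  then show ?thesis using sub unfolding W_max_def A_def[symmetric] by auto
qed

theorem part18: "W_max 18 9 \<in> {4..21}"
  by (rule Wmax_range[OF _ _ check18]) (auto simp: M18_def)


definition M17 :: "int list list list" where "M17 = [[[1,0,1,0,0,0,1,0,0,0,1,-1,1,-1,-1,0,1], [1,0,-1,-1,1,0,0,-1,0,0,-1,0,-1,-1,0,0,1], [1,1,-1,1,0,-1,0,1,0,0,0,0,0,-1,0,-1,-1], [1,1,0,0,-1,0,0,0,-1,1,0,0,-1,1,-1,1,0], [0,0,0,0,1,1,1,1,0,-1,-1,0,0,0,-1,1,-1], [1,-1,0,0,1,-1,-1,0,0,0,0,1,1,1,-1,0,0], [1,0,1,-1,0,1,0,1,-1,0,0,1,0,0,1,-1,0], [0,1,0,0,0,1,-1,0,1,1,0,1,1,-1,0,1,0], [1,-1,0,0,0,1,-1,0,1,0,1,-1,-1,0,0,0,-1], [0,0,0,1,-1,1,-1,0,0,-1,-1,0,0,0,-1,-1,1], [0,1,-1,-1,0,0,0,1,1,-1,1,0,0,1,0,0,1], [0,1,1,1,1,0,0,-1,0,-1,1,1,-1,0,0,0,0], [1,0,-1,1,0,1,1,-1,0,0,0,0,1,1,1,0,0], [0,1,0,-1,0,0,-1,-1,-1,-1,0,-1,1,0,0,0,-1], [0,1,1,0,1,0,0,0,1,1,-1,-1,0,1,0,-1,0], [1,0,1,0,-1,-1,0,0,1,-1,-1,0,0,0,1,1,0], [0,0,0,1,1,0,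-1,1,-1,0,0,-1,0,0,1,1,1]],
 [[1,-1,0,-1,0,1,0,-1,0,1,-1,1,1,0,0,0,0], [0,1,1,-1,1,-1,0,0,0,0,-1,1,-1,0,1,0,0], [0,0,1,1,0,1,-1,0,1,0,-1,-1,0,-1,1,0,0], [1,-1,1,0,0,-1,0,-1,1,-1,1,0,0,0,0,-1,0], [1,0,-1,1,1,0,-1,-1,0,0,0,0,-1,1,0,1,0], [1,0,0,1,-1,0,1,0,-1,1,0,0,-1,0,1,-1,0], [0,1,-1,0,1,0,0,0,1,1,1,0,1,0,1,-1,0], [1,1,0,0,1,1,0,0,-1,-1,0,0,0,-1,-1,-1,0], [0,1,-1,0,-1,0,1,-1,1,-1,-1,0,0,0,0,0,1], [0,1,1,0,-1,1,-1,0,0,0,1,1,0,1,0,0,1], [1,0,-1,-1,-1,0,-1,1,0,-1,0,0,0,0,1,0,-1], [1,0,0,-1,0,0,0,1,1,1,0,-1,-1,0,-1,0,1], [0,1,0,0,-1,-1,-1,-1,0,1,0,0,0,-1,-1,0,-1], [1,1,1,0,0,0,1,0,0,0,0,-1,1,1,0,1,-1], [1,0,0,1,0,-1,0,1,0,0,0,1,1,-1,0,1,1], [0,0,0,0,0,1,1,0,1,0,1,1,-1,-1,0,1,-1], [0,0,0,1,0,0,0,1,1,0,-1,1,0,1,-1,-1,-1]],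
 [[1,0,-1,0,1,0,-1,0,1,-1,1,1,0,-1,0,0,0], [0,0,1,0,-1,0,-1,-1,1,0,1,-1,1,0,0,1,0], [1,0,1,-1,0,0,-1,0,0,-1,-1,-1,-1,0,0,-1,0], [1,0,0,0,1,-1,0,-1,-1,0,-1,0,1,0,1,1,0], [1,0,-1,1,-1,-1,0,-1,0,0,0,0,0,1,-1,-1,0], [0,1,1,0,0,-1,0,1,0,-1,0,1,0,1,-1,1,0], [0,1,0,1,0,1,0,-1,0,0,-1,0,-1,-1,-1,1,0], [1,-1,0,0,-1,1,0,0,0,0,0,1,-1,1,1,1,0], [1,1,0,-1,-1,0,1,0,-1,0,1,0,0,-1,0,0,-1], [0,0,0,1,1,1,0,0,-1,-1,1,-1,0,1,0,0,-1], [0,1,-1,-1,0,1,0,0,1,0,-1,0,1,1,0,0,-1], [0,1,0,-1,1,0,0,-1,0,1,1,0,-1,1,0,0,1], [1,-1,1,0,1,0,1,0,1,1,0,0,0,0,-1,0,-1], [1,1,0,1,0,0,1,1,1,0,0,-1,0,0,1,0,1], [1,0,0,0,0,1,-1,1,-1,1,0,0,1,0,-1,0,1], [0,0,1,0,0,1,1,-1,0,-1,0,1,1,0,0,-1,1], [0,1,1,1,0,0,-1,0,0,1,0,1,0,0,1,-1,-1]],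
 [[0,1,-1,0,0,0,-1,-1,-1,1,0,1,1,1,0,0,0], [1,0,0,0,-1,0,-1,1,0,1,1,1,-1,-1,0,0,0], [0,0,0,0,0,1,1,1,-1,1,1,-1,1,0,1,0,0], [1,0,0,0,-1,1,0,-1,-1,-1,-1,0,0,-1,1,0,0], [1,-1,0,-1,1,1,0,0,-1,0,0,0,-1,1,-1,0,0], [0,1,-1,0,-1,0,0,1,0,0,-1,-1,-1,1,0,-1,0], [1,1,-1,1,0,0,1,0,0,-1,1,0,0,0,-1,1,0], [1,1,0,-1,1,0,-1,0,1,0,0,-1,0,0,1,1,0], [0,1,1,1,1,1,0,1,0,0,-1,1,0,0,0,0,1], [1,0,0,-1,0,-1,1,1,0,0,-1,1,1,0,0,0,-1], [1,0,1,0,-1,0,1,-1,1,1,0,0,0,1,0,0,1], [0,1,1,-1,0,-1,0,0,-1,-1,1,0,0,0,0,-1,1], [0,1,0,0,1,0,1,-1,0,1,0,0,-1,-1,0,-1,-1], [1,-1,-1,1,1,-1,0,0,0,0,0,0,0,0,1,-1,1], [1,0,1,1,0,0,-1,0,0,0,0,-1,1,0,-1,-1,-1], [0,0,0,0,0,1,0,0,1,-1,1,1,0,1,1,-1,-1], [0,0,1,1,0,-1,0,0,-1,0,0,0,-1,1,1,1,-1]],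
 [[1,0,-1,0,-1,-1,1,0,1,0,1,1,0,0,1,0,0], [1,0,-1,1,1,0,0,-1,0,1,0,0,1,-1,-1,0,0], [0,1,0,0,-1,0,-1,1,0,-1,1,0,1,-1,-1,0,0], [0,0,1,1,-1,1,1,-1,-1,0,1,0,0,0,0,1,0], [1,0,1,1,0,-1,0,0,-1,-1,-1,1,0,0,0,-1,0], [1,0,1,1,0,0,-1,1,1,1,0,0,0,1,0,1,0], [1,0,0,0,0,1,1,0,1,-1,0,-1,0,1,-1,-1,0], [0,0,0,1,1,1,0,1,0,0,1,0,-1,-1,1,-1,0], [1,1,0,-1,0,1,-1,-1,0,0,0,1,-1,0,0,0,-1], [1,-1,-1,0,-1,0,-1,0,-1,0,0,-1,-1,0,0,0,1], [0,1,1,0,0,-1,0,-1,1,0,0,-1,-1,-1,0,0,1], [0,0,0,0,1,0,-1,-1,0,-1,1,0,1,1,1,0,1], [1,-1,1,-1,0,0,0,0,0,0,0,-1,1,-1,1,0,-1], [1,1,0,-1,1,0,1,1,-1,0,0,0,0,0,0,1,1], [0,1,0,0,0,-1,0,0,-1,1,1,-1,0,1,0,-1,-1], [0,1,-1,1,0,0,0,0,0,-1,-1,-1,0,0,1,1,-1], [0,1,0,0,-1,1,0,0,0,1,-1,0,1,0,1,-1,1]]]"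

lemma check17: "check_all 17 M17"
  by code_simp

theorem part17: "W_max 17 9 \<in> {5..18}"
  by (rule Wmax_range[OF _ _ check17]) (auto simp: M17_def)

theorem proposition6p7:
  shows "W_max 17 9 \<in> {5..18} \<and> W_max 18 9 \<in> {4..21}"
  using part17 part18 by blast

end
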